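(* Suppose the channel is the binary erasure channel: given $W^{(l_0)}=(\mathbf I_d,\mathbf 0)$, the deployed channel weights are $W'^{(l_0)}=(U,\mathbf 0)$ where $U=\mathrm{diag}(U_1,\dots,U_d)$ with $U_1,\dots,U_d$ i.i.d. $\mathrm{Bernoulli}(1-p_o)$ (i.e. $U_i=0$ with probability $p_o\in[0,1]$, $U_i=1$ otherwise). Take the channel-layer metric $d^{(l_0)}((M',B'),(M,B))=\|M'-M\|_F+\|B'-B\|_2$. Assume that for every $w\in\mathcal W$ the loss $\ell(w,Z)$, $Z\sim P_Z$, is $\sigma$-sub-Gaussian and that for every $z$, $w\mapsto\ell(w,z)$ is $K$-Lipschitz with respect to $d_{\mathcal W}$. Then for every data-independent distribution $Q_{\tilde W}$ on $\tilde{\mathcal W}$, every $k>0$ and every $\epsilon\in(0,1)$, with probability at least $1-\epsilon$ over $S\sim P_Z^n$, $$\Delta\le\frac{k\sigma^2}{2n}+\frac{D(P_{\tilde W|S}\|Q_{\tilde W})-\log\epsilon}{k}+K\sum_{r=1}^d\binom dr p_o^r(1-p_o)^{d-r}\sqrt r.$$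
   Context: Setting. Let $\mathcal Z=\mathcal X\times\mathcal Y$ be an instance space with data distribution $P_Z$, and let $S=(Z_1,\dots,Z_n)\sim P_Z^{n}$ be a training set of $n$ i.i.d. samples. An augmented network has $L+1$ layers with weights $W=(W^{(1)},\dots,W^{(L+1)})\in\mathcal W=\mathcal W^{(1)}\times\cdots\times\mathcal W^{(L+1)}$. A distinguished index $l_0$ is the channel layer: $\mathcal W^{(l_0)}=\mathbb R^{d\times d}\times\mathbb R^{d}$, with weights $W^{(l_0)}=(M^{(l_0)},B^{(l_0)})$ acting on a feature $f\in\mathbb R^d$ by $f\mapsto M^{(l_0)}f+B^{(l_0)}$. The other weights $\tilde W=(W^{(l)})_{l\ne l_0}\in\tilde{\mathcal W}=\prod_{l\neq l_0}\mathcal W^{(l)}$ are the learnable weights. A learning algorithm is a Markov kernel $P_{\tilde W|S}$ from $\mathcal Z^n$ to $\tilde{\mathcal W}$; the channel-free training distribution on $\mathcal W$ is $P_{W|S}=P_{\tilde W|S}\otimes\delta_{(\mathbf I_d,\mathbf 0)}$ (channel layer fixed to identity matrix and zero bias). A channel is a Markov kernel $P_{W'^{(l_0)}|W^{(l_0)}}$ on $\mathcal W^{(l_0)}$; the deployment kernel $P_{W'|W}$ sets $W'^{(l)}=W^{(l)}$ for all $l\ne l_0$ and draws $W'^{(l_0)}\sim P_{W'^{(l_0)}|W^{(l_0)}}(\cdot\,|\,W^{(l_0)})$ independently of everything else. The joint distribution on $\mathcal W\times\mathcal W$ is $P_{W'W|S}(W',W|S)=P_{W'|W}(W'|W)P_{W|S}(W|S)$,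 and $P_{W'|S}$ denotes its marginal in $W'$. For a loss $\ell:\mathcal W\times\mathcal Z\to[0,\infty)$ let $L(w)=\mathbb E_{Z\sim P_Z}[\ell(w,Z)]$ and $\hat L(w,S)=\frac1n\sum_{i=1}^n\ell(w,Z_i)$; for a distribution $P$ on $\mathcal W$, $L(P)=\int L(w)P(dw)$ and $\hat L_S(P)=\int\hat L(w,S)P(dw)$. The wireless generalization error is $\Delta=L(P_{W'|S})-\hat L_S(P_{W|S})$. The metric on $\mathcal W$ is $d_{\mathcal W}(W',W)=\sum_{l=1}^{L+1}d^{(l)}(W'^{(l)},W^{(l)})$ where each $d^{(l)}$ is a metric on $\mathcal W^{(l)}$. "$\sigma$-sub-Gaussian" means $\log\mathbb E[e^{\lambda(\ell(w,Z)-L(w))}]\le\lambda^2\sigma^2/2$ for all $\lambda\in\mathbb R$; "$K$-Lipschitz" means $|\ell(w,z)-\ell(w',z)|\le K\,d_{\mathcal W}(w,w')$. "Data-independent" means not depending on $S$. $D(\cdot\|\cdot)$ is the Kullback–Leibler divergence (natural logarithm). $\|\cdot\|_F$ is the Frobenius norm. *)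

theory Defs
  imports "HOL-Probability.Probability"
begin

type_synonym ('d) chw = "(real^'d^'d) \<times> (real^'d)"

definition frob :: "real^('d::finite)^'d \<Rightarrow> real" where
  "frob M = sqrt (\<Sum>i\<in>UNIV. \<Sum>j\<in>UNIV. (M $ i $ j)^2)"

text \<open>Metric on the whole weight space W = (learnable weights) x (channel layer):
  dt is the sum of the layer metrics over l <> l0, the channel-layer metric is
  ||M'-M||_F + ||B'-B||_2.\<close>
definition dW :: "('w \<Rightarrow> 'w \<Rightarrow> real) \<Rightarrow> ('w \<times> ('d::finite) chw) \<Rightarrow> ('w \<times> ('d::finite) chw) \<Rightarrow> real" where
  "dW dt w' w = dt (fst w') (fst w) + frob (fst (snd w') - fst (snd w)) + norm (snd (snd w') - snd (snd w))"

definition is_metric :: "('w \<Rightarrow> 'w \<Rightarrow> real) \<Rightarrow> bool" where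
  "is_metric dt \<longleftrightarrow> (\<forall>x y. dt x y = 0 \<longleftrightarrow> x = y) \<and> (\<forall>x y. dt x y = dt y x)
      \<and> (\<forall>x y z. dt x z \<le> dt x y + dt y z)"

definition subgaussian :: "'z measure \<Rightarrow> ('z \<Rightarrow> real) \<Rightarrow> real \<Rightarrow> bool" where
  "subgaussian M f \<sigma> \<longleftrightarrow> integrable M f \<and>
     (\<forall>t::real. integrable M (\<lambda>z. exp (t * (f z - (\<integral>x. f x \<partial>M)))) \<and>
        ln (\<integral>z. exp (t * (f z - (\<integral>x. f x \<partial>M))) \<partial>M) \<le> t^2 * \<sigma>^2 / 2)"

definition KL :: "'a measure \<Rightarrow> 'a measure \<Rightarrow> ereal" where
  "KL P Q = (if sets P = sets Q \<and> absolutely_continuous Q P then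
      (let f = (\<lambda>x. enn2real (RN_deriv Q P x)) in
        enn2ereal (\<integral>\<^sup>+x. ennreal (f x * ln (f x)) \<partial>Q)
        - enn2ereal (\<integral>\<^sup>+x. ennreal (- (f x * ln (f x))) \<partial>Q))
    else \<infinity>)"

definition bec :: "real \<Rightarrow> ('d::finite) chw pmf" where
  "bec po = map_pmf (\<lambda>u. ((\<chi> i j. if i = j \<and> u i then 1 else 0), 0))
               (Pi_pmf UNIV False (\<lambda>_. bernoulli_pmf (1 - po)))"

definition popL :: "'z measure \<Rightarrow> ('v \<Rightarrow> 'z \<Rightarrow> real) \<Rightarrow> 'v measure \<Rightarrow> ennreal" where
  "popL PZ loss P = (\<integral>\<^sup>+w. (\<integral>\<^sup>+z. ennreal (loss w z) \<partial>PZ) \<partial>P)"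

definition empL :: "('v \<Rightarrow> 'z \<Rightarrow> real) \<Rightarrow> nat \<Rightarrow> (nat \<Rightarrow> 'z) \<Rightarrow> 'v measure \<Rightarrow> ennreal" where
  "empL loss n S P = (\<integral>\<^sup>+w. ennreal ((1 / real n) * (\<Sum>i<n. loss w (S i))) \<partial>P)"

definition train_dist :: "'w measure \<Rightarrow> ('w \<times> ('d::finite) chw) measure" where
  "train_dist PWt = PWt \<Otimes>\<^sub>M return (count_space UNIV) (mat 1, 0)"

definition deploy_dist :: "'w measure \<Rightarrow> ('d::finite) chw pmf \<Rightarrow> ('w \<times> ('d::finite) chw) measure" where
  "deploy_dist PWt ch = PWt \<Otimes>\<^sub>M measure_pmf ch"

end

theory Submission
  imports Defs
begin


lemma ptwise_ineq:
  fixes x y :: real assumes "0 \<le> x"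
  shows "x * y \<le> x * ln x - x + exp y"
proof (cases "x = 0")
  case True then show ?thesis by simp
next
  case False
  then have xp: "x > 0" using assms by simp
  have "1 + (y - ln x) \<le> exp (y - ln x)" by (rule exp_ge_add_one_self)
  then have "x * (1 + (y - ln x)) \<le> x * exp (y - ln x)" using xp by simp
  also have "x * exp (y - ln x) = exp y" using xp by (simp add: exp_diff)
  finally show ?thesis by (simp add: algebra_simps)
qed

lemma xlnx_ge: fixes x :: real assumes "0 \<le> x" shows "x * ln x \<ge> -1"
proof (cases "x = 0")
  case True then show ?thesis by simp
next
  case False
  then have xp: "x > 0" using assms by simp
  have "ln (1/x) \<le> 1/x - 1" using xp by (intro ln_le_minus_one) simp
  then have "- ln x \<le> 1/x - 1" using xp by (simp add: ln_div)
  then have "x * (- ln x) \<le> x * (1/x - 1)" using xp by (intro mult_left_mono) auto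
  then show ?thesis using xp by (simp add: algebra_simps)
qed

lemma DV:
  fixes P Q :: "'w measure" and h e :: "'w \<Rightarrow> real" and k Z :: real
  assumes P: "prob_space P" and Q: "prob_space Q" and sets: "sets P = sets Q"
    and ac: "absolutely_continuous Q P"
    and hm[measurable]: "h \<in> borel_measurable Q" and em[measurable]: "e \<in> borel_measurable Q"
    and h0: "\<And>w. 0 \<le> h w" and e0: "\<And>w. 0 \<le> e w" and k: "k > 0"
    and Zeq: "(\<integral>\<^sup>+w. ennreal (exp (k * (h w - e w))) \<partial>Q) = ennreal Z" and Z: "Z > 0"
  shows "KL P Q \<noteq> -\<infinity>" and "KL P Q = \<infinity> \<or> (\<integral>\<^sup>+w. ennreal (e w) \<partial>P) = \<infinity> \<or>
    (\<exists>\<kappa> Hr Er. KL P Q = ereal \<kappa> \<and> (\<integral>\<^sup>+w. ennreal (h w) \<partial>P) = ennreal Hr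
        \<and> (\<integral>\<^sup>+w. ennreal (e w) \<partial>P) = ennreal Er \<and> 0 \<le> Hr \<and> 0 \<le> Er \<and> Hr \<le> Er + (\<kappa> + ln Z) / k)"
proof -
  interpret Q: prob_space Q by fact
  interpret P: prob_space P by fact
  define f where "f = (\<lambda>x. enn2real (RN_deriv Q P x))"
  have fm[measurable]: "f \<in> borel_measurable Q" unfolding f_def by measurable
  have f0: "\<And>x. 0 \<le> f x" unfolding f_def by simp
  define c where "c = ln Z"
  define Pp where "Pp = (\<integral>\<^sup>+x. ennreal (f x * ln (f x)) \<partial>Q)"
  define Nn where "Nn = (\<integral>\<^sup>+x. ennreal (- (f x * ln (f x))) \<partial>Q)"
  define H where "H = (\<integral>\<^sup>+w. ennreal (h w) \<partial>P)"
  define E where "E = (\<integral>\<^sup>+w. ennreal (e w) \<partial>P)"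
  have KLeq: "KL P Q = enn2ereal Pp - enn2ereal Nn"
    unfolding KL_def Pp_def Nn_def f_def using sets ac by (simp add: Let_def)
  have RN: "AE x in Q. RN_deriv Q P x = ennreal (f x)"
    using Q.RN_deriv_finite[OF P.sigma_finite_measure_axioms ac sets]
    unfolding f_def by eventually_elim (auto simp: less_top)
  have intP: "(\<integral>\<^sup>+x. g x \<partial>P) = (\<integral>\<^sup>+x. ennreal (f x) * g x \<partial>Q)"
    if [measurable]: "g \<in> borel_measurable Q" for g
  proof -
    have "(\<integral>\<^sup>+x. g x \<partial>P) = (\<integral>\<^sup>+x. RN_deriv Q P x * g x \<partial>Q)"
      by (rule Q.RN_deriv_nn_integral[OF ac sets]) simp
    also have "\<dots> = (\<integral>\<^sup>+x. ennreal (f x) * g x \<partial>Q)"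
      using RN by (intro nn_integral_cong_AE) auto
    finally show ?thesis .
  qed
  have int_f: "(\<integral>\<^sup>+x. ennreal (f x) \<partial>Q) = 1"
    using intP[of "\<lambda>_. 1"] P.emeasure_space_1 by simp
  have int_fk: "(\<integral>\<^sup>+x. ennreal (f x * (k * r x)) \<partial>Q) = ennreal k * (\<integral>\<^sup>+x. ennreal (r x) \<partial>P)"
    if [measurable]: "r \<in> borel_measurable Q" and r0: "\<And>x. 0 \<le> r x" for r
  proof -
    have "(\<integral>\<^sup>+x. ennreal (f x * (k * r x)) \<partial>Q) = (\<integral>\<^sup>+x. ennreal (f x) * ennreal (k * r x) \<partial>Q)"
      using f0 k r0 by (intro nn_integral_cong ennreal_mult) (auto intro: less_imp_le)
    also have "\<dots> = (\<integral>\<^sup>+x. ennreal (k * r x) \<partial>P)" by (rule intP[symmetric]) simp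
    also have "\<dots> = (\<integral>\<^sup>+x. ennreal k * ennreal (r x) \<partial>P)"
      by (intro nn_integral_cong) (simp add: ennreal_mult k r0 less_imp_le)
    also have "\<dots> = ennreal k * (\<integral>\<^sup>+x. ennreal (r x) \<partial>P)"
      by (rule nn_integral_cmult) (simp add: measurable_cong_sets[OF sets refl])
    finally show ?thesis .
  qed
  have int_fc: "(\<integral>\<^sup>+x. ennreal (f x * a) \<partial>Q) = ennreal a" if "0 \<le> a" for a
  proof -
    have "(\<integral>\<^sup>+x. ennreal (f x * a) \<partial>Q) = (\<integral>\<^sup>+x. ennreal (f x) * ennreal a \<partial>Q)"
      using f0 that by (intro nn_integral_cong ennreal_mult) auto
    also have "\<dots> = ennreal a" by (simp add: nn_integral_multc int_f)
    finally show ?thesis .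
  qed
  have int_exp: "(\<integral>\<^sup>+x. ennreal (exp (k * (h x - e x)) * (1 / Z)) \<partial>Q) = 1"
  proof -
    have "(\<integral>\<^sup>+x. ennreal (exp (k * (h x - e x)) * (1 / Z)) \<partial>Q)
        = (\<integral>\<^sup>+x. ennreal (exp (k * (h x - e x))) * ennreal (1 / Z) \<partial>Q)"
      using Z by (intro nn_integral_cong ennreal_mult) auto
    also have "\<dots> = ennreal Z * ennreal (1 / Z)" by (simp add: nn_integral_multc Zeq)
    also have "\<dots> = 1" using Z by (simp flip: ennreal_mult)
    finally show ?thesis .
  qed
  then have int_exp': "(\<integral>\<^sup>+x. ennreal (exp (k * (h x - e x)) / Z) \<partial>Q) = 1" by simp
  have Nn_le: "Nn \<le> 1"
  proof -
    have "Nn \<le> (\<integral>\<^sup>+x. 1 \<partial>Q)" unfolding Nn_def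
      using xlnx_ge[OF f0] by (intro nn_integral_mono) (simp add: ennreal_le_1)
    also have "\<dots> = 1" by (simp add: Q.emeasure_space_1)
    finally show ?thesis .
  qed
  show "KL P Q \<noteq> -\<infinity>"
  proof -
    have "Nn \<noteq> \<infinity>" using Nn_le by (auto simp: top_unique)
    then show ?thesis unfolding KLeq by (cases Nn; cases Pp) auto
  qed
  have pt: "ennreal (f x * (k * h x)) + ennreal (- (f x * ln (f x))) + ennreal (f x) + ennreal (f x * max 0 (- c))
     \<le> ennreal (f x * (k * e x)) + ennreal (f x * ln (f x)) + ennreal (exp (k * (h x - e x)) * (1 / Z)) + ennreal (f x * max 0 c)" for x
  proof -
    have base: "f x * (k * (h x - e x) - c) \<le> f x * ln (f x) - f x + exp (k * (h x - e x) - c)"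
      by (rule ptwise_ineq[OF f0])
    have ex: "exp (k * (h x - e x) - c) = exp (k * (h x - e x)) * (1 / Z)"
      unfolding c_def using Z by (simp add: exp_diff)
    have fh: "0 \<le> f x * (k * h x)" "0 \<le> f x * (k * e x)" using f0 h0 e0 k by simp_all
    have m: "0 \<le> f x * max 0 (- c)" "0 \<le> f x * max 0 c" using f0 by simp_all
    have ez: "0 \<le> exp (k * (h x - e x)) * (1 / Z)" using Z by simp
    have real: "f x * (k * h x) + max 0 (- (f x * ln (f x))) + f x + f x * max 0 (- c)
      \<le> f x * (k * e x) + max 0 (f x * ln (f x)) + exp (k * (h x - e x)) * (1 / Z) + f x * max 0 c"
    proof -
      have m1: "max 0 (- a) = max 0 a - a" for a :: real by (simp add: max_def)
      have m2: "f x * max 0 (- c) = f x * max 0 c - f x * c" by (simp add: m1 right_diff_distrib)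
      have b2: "f x * (k * h x) - f x * (k * e x) - f x * c \<le> f x * ln (f x) - f x + exp (k * (h x - e x)) * (1 / Z)"
        using base unfolding ex by (simp add: algebra_simps)
      show ?thesis unfolding m2 m1[of "f x * ln (f x)"] using b2 by linarith
    qed
    have "ennreal (f x * (k * h x)) + ennreal (- (f x * ln (f x))) + ennreal (f x) + ennreal (f x * max 0 (- c))
       = ennreal (f x * (k * h x) + max 0 (- (f x * ln (f x))) + f x + f x * max 0 (- c))"
      using fh m f0[of x] by (simp add: ennreal_plus[symmetric] del: ennreal_plus) (simp add: ennreal_max_0)
    also have "\<dots> \<le> ennreal (f x * (k * e x) + max 0 (f x * ln (f x)) + exp (k * (h x - e x)) * (1 / Z) + f x * max 0 c)"
      using real by (rule ennreal_leI)
    also have "\<dots> = ennreal (f x * (k * e x)) + ennreal (f x * ln (f x)) + ennreal (exp (k * (h x - e x)) * (1 / Z)) + ennreal (f x * max 0 c)"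
      using fh m ez by (simp add: ennreal_plus[symmetric] del: ennreal_plus) (simp add: ennreal_max_0)
    finally show ?thesis .
  qed
  have add4: "(\<integral>\<^sup>+x. a x + b x + c' x + d x \<partial>Q) = integral\<^sup>N Q a + integral\<^sup>N Q b + integral\<^sup>N Q c' + integral\<^sup>N Q d"
    if [measurable]: "a \<in> borel_measurable Q" "b \<in> borel_measurable Q" "c' \<in> borel_measurable Q" "d \<in> borel_measurable Q"
    for a b c' d :: "'w \<Rightarrow> ennreal"
    by (simp add: nn_integral_add)
  have "ennreal k * H + Nn + 1 + ennreal (max 0 (- c))
      = (\<integral>\<^sup>+x. ennreal (f x * (k * h x)) + ennreal (- (f x * ln (f x))) + ennreal (f x) + ennreal (f x * max 0 (- c)) \<partial>Q)"
    by (subst add4) (simp_all add: int_fk h0 H_def Nn_def int_f int_fc)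
  also have "\<dots> \<le> (\<integral>\<^sup>+x. ennreal (f x * (k * e x)) + ennreal (f x * ln (f x)) + ennreal (exp (k * (h x - e x)) * (1 / Z)) + ennreal (f x * max 0 c) \<partial>Q)"
    by (intro nn_integral_mono pt)
  also have "\<dots> = ennreal k * E + Pp + 1 + ennreal (max 0 c)"
    by (subst add4) (simp_all add: int_fk e0 E_def Pp_def int_exp' int_fc)
  finally have main: "ennreal k * H + Nn + 1 + ennreal (max 0 (- c)) \<le> ennreal k * E + Pp + 1 + ennreal (max 0 c)" .
  show "KL P Q = \<infinity> \<or> (\<integral>\<^sup>+w. ennreal (e w) \<partial>P) = \<infinity> \<or>
    (\<exists>\<kappa> Hr Er. KL P Q = ereal \<kappa> \<and> (\<integral>\<^sup>+w. ennreal (h w) \<partial>P) = ennreal Hr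
        \<and> (\<integral>\<^sup>+w. ennreal (e w) \<partial>P) = ennreal Er \<and> 0 \<le> Hr \<and> 0 \<le> Er \<and> Hr \<le> Er + (\<kappa> + ln Z) / k)"
  proof (cases "E = \<infinity> \<or> Pp = \<infinity>")
    case True
    then show ?thesis
    proof
      assume "E = \<infinity>" then show ?thesis unfolding E_def by simp
    next
      assume "Pp = \<infinity>"
      moreover have "Nn \<noteq> \<infinity>" using Nn_le by (auto simp: top_unique)
      ultimately have "KL P Q = \<infinity>" unfolding KLeq by (cases Nn) auto
      then show ?thesis by simp
    qed
  next
    case False
    then obtain Er Pr where Er: "E = ennreal Er" "0 \<le> Er" and Pr: "Pp = ennreal Pr" "0 \<le> Pr"
      by (cases E; cases Pp) auto
    have "Nn \<noteq> \<infinity>" using Nn_le by (auto simp: top_unique)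
    then obtain Nr where Nr: "Nn = ennreal Nr" "0 \<le> Nr"
      by (cases Nn) auto
    have "ennreal k * H < \<infinity>"
    proof -
      have "ennreal k * H \<le> ennreal k * H + (Nn + 1 + ennreal (max 0 (- c)))"
        by (rule add_increasing2) auto
      also have "\<dots> \<le> ennreal k * E + Pp + 1 + ennreal (max 0 c)"
        using main by (simp add: add.assoc)
      also have "\<dots> < \<infinity>" unfolding Er Pr
        by (simp add: less_top[symmetric] ennreal_mult_eq_top_iff)
      finally show ?thesis .
    qed
    then have "H \<noteq> \<infinity>" using k by (auto simp: ennreal_mult_eq_top_iff)
    then obtain Hr where Hr: "H = ennreal Hr" "0 \<le> Hr"
      by (cases H) auto
    have e1: "ennreal k * H + Nn + 1 + ennreal (max 0 (- c)) = ennreal (k * Hr + Nr + 1 + max 0 (- c))"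
      unfolding Hr(1) Nr(1) using k Hr(2) Nr(2) by (simp add: ennreal_mult)
    have e2: "ennreal k * E + Pp + 1 + ennreal (max 0 c) = ennreal (k * Er + Pr + 1 + max 0 c)"
      unfolding Er(1) Pr(1) using k Er(2) Pr(2) by (simp add: ennreal_mult)
    have "ennreal (k * Hr + Nr + 1 + max 0 (- c)) \<le> ennreal (k * Er + Pr + 1 + max 0 c)"
      using main unfolding e1 e2 .
    then have r: "k * Hr + Nr + 1 + max 0 (- c) \<le> k * Er + Pr + 1 + max 0 c"
    proof (subst (asm) ennreal_le_iff)
      show "0 \<le> k * Er + Pr + 1 + max 0 c" using Er Pr k by (simp add: add_nonneg_nonneg)
    qed
    have mc: "max 0 c - max 0 (- c) = c" by (simp add: max_def)
    have "k * Hr \<le> k * Er + (Pr - Nr + c)" using r mc by linarith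
    also have "\<dots> = k * (Er + (Pr - Nr + c) / k)" using k by (simp add: field_simps)
    finally have "k * Hr \<le> k * (Er + (Pr - Nr + c) / k)" .
    then have "Hr \<le> Er + (Pr - Nr + ln Z) / k" using k unfolding c_def by simp
    moreover have "KL P Q = ereal (Pr - Nr)" unfolding KLeq Pr Nr using Pr Nr by simp
    ultimately show ?thesis using Hr Er unfolding H_def E_def by blast
  qed
qed



lemma bec_phi:
  fixes u :: "'d::finite \<Rightarrow> bool"
  shows "frob (fst (((\<chi> i j. if i = j \<and> u i then 1 else 0), 0) :: 'd chw) - mat 1)
          + norm (snd (((\<chi> i j. if i = j \<and> u i then 1 else 0), 0) :: 'd chw))
         = sqrt (real (CARD('d) - card {i. u i}))"
proof -
  have sq: "((if i = j \<and> u i then 1 else 0) - (if i = j then 1 else 0))^2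
        = (if i = j then (if u i then 0 else 1) else (0::real))" for i j :: 'd
    by auto
  have "(\<Sum>i\<in>UNIV. \<Sum>j\<in>UNIV. ((if i = j \<and> u i then 1 else 0) - (if i = j then 1 else 0))^2)
        = (\<Sum>i\<in>UNIV. (if u i then 0 else (1::real)))"
    unfolding sq by (simp add: sum.delta sum.delta')
  also have "\<dots> = real (card {i. \<not> u i})"
    by (simp add: sum.If_cases Collect_neg_eq Compl_eq_Diff_UNIV)
  also have "card {i. \<not> u i} = CARD('d) - card {i. u i}"
  proof -
    have "{i. \<not> u i} = UNIV - {i. u i}" by auto
    then show ?thesis by (simp add: card_Diff_subset)
  qed
  finally show ?thesis
    by (simp add: frob_def mat_def)
qed

lemma bec_int:
  assumes po: "0 \<le> po" "po \<le> 1"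
  shows "(\<integral>\<^sup>+c. ennreal (frob (fst c - mat 1) + norm (snd c)) \<partial>measure_pmf (bec po :: 'd::finite chw pmf))
       = ennreal (\<Sum>r=1..CARD('d). real (CARD('d) choose r) * po^r * (1 - po)^(CARD('d) - r) * sqrt (real r))"
proof -
  define d where "d = CARD('d)"
  define B where "B = binomial_pmf d (1 - po)"
  have p1: "0 \<le> 1 - po" "1 - po \<le> 1" using po by auto
  have B: "B = map_pmf (\<lambda>f. card {x\<in>UNIV. f x}) (Pi_pmf (UNIV :: 'd set) False (\<lambda>_. bernoulli_pmf (1 - po)))"
    unfolding B_def d_def by (rule binomial_pmf_altdef') (use p1 in auto)
  have "(\<integral>\<^sup>+c. ennreal (frob (fst c - mat 1) + norm (snd c)) \<partial>measure_pmf (bec po :: 'd::finite chw pmf))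
      = (\<integral>\<^sup>+u. ennreal (sqrt (real (d - card {i. u i}))) \<partial>measure_pmf (Pi_pmf (UNIV :: 'd set) False (\<lambda>_. bernoulli_pmf (1 - po))))"
    unfolding bec_def nn_integral_map_pmf bec_phi d_def ..
  also have "\<dots> = (\<integral>\<^sup>+r. ennreal (sqrt (real (d - r))) \<partial>measure_pmf B)"
    unfolding B nn_integral_map_pmf by simp
  also have "\<dots> = (\<Sum>r\<in>{..d}. ennreal (sqrt (real (d - r))) * pmf B r)"
  proof (rule nn_integral_measure_pmf_support)
    show "\<And>x. x \<in> set_pmf B \<Longrightarrow> x \<notin> {..d} \<Longrightarrow> ennreal (sqrt (real (d - x))) = 0"
      unfolding B_def using set_pmf_binomial_eq[OF p1, of d] by (auto split: if_splits)
  qed auto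
  also have "\<dots> = (\<Sum>r\<in>{..d}. ennreal (sqrt (real (d - r)) * (real (d choose r) * (1 - po)^r * po^(d - r))))"
    unfolding B_def pmf_binomial[OF p1] using p1
    by (intro sum.cong refl, subst ennreal_mult) auto
  also have "\<dots> = ennreal (\<Sum>r\<in>{..d}. sqrt (real (d - r)) * (real (d choose r) * (1 - po)^r * po^(d - r)))"
    using p1 by (intro sum_ennreal) auto
  also have "(\<Sum>r\<in>{..d}. sqrt (real (d - r)) * (real (d choose r) * (1 - po)^r * po^(d - r)))
      = (\<Sum>r\<in>{..d}. real (d choose r) * po^r * (1 - po)^(d - r) * sqrt (real r))"
  proof (rule sum.reindex_bij_witness[of _ "\<lambda>r. d - r" "\<lambda>r. d - r"])
    show "\<And>a. a \<in> {..d} \<Longrightarrow> d - (d - a) = a" by auto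
    show "\<And>a. a \<in> {..d} \<Longrightarrow> d - a \<in> {..d}" by auto
  next
    fix a assume a: "a \<in> {..d}"
    have c: "d - (d - a) = a" using a by auto
    have ad: "a \<le> d" using a by simp
    have bin: "d choose (d - a) = d choose a" using binomial_symmetric[OF ad] by (rule sym)
    show "real (d choose (d - a)) * po ^ (d - a) * (1 - po) ^ (d - (d - a)) * sqrt (real (d - a))
      = sqrt (real (d - a)) * (real (d choose a) * (1 - po) ^ a * po ^ (d - a))"
      unfolding c bin by (simp only: mult_ac)
  qed auto
  also have "\<dots> = (\<Sum>r=1..d. real (d choose r) * po^r * (1 - po)^(d - r) * sqrt (real r))"
  proof -
    have eq: "{..d} = insert 0 {1..d}" by auto
    show ?thesis unfolding eq by (subst sum.insert) auto
  qed
  finally show ?thesis unfolding d_def .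
qed



lemma deploy_bound:
  fixes loss :: "('w \<times> 'd::finite chw) \<Rightarrow> 'z \<Rightarrow> real" and P Wt :: "'w measure" and PZ :: "'z measure"
  assumes PZ: "prob_space PZ" and P: "prob_space P" and sets: "sets P = sets Wt"
    and loss_nonneg: "\<And>w z. loss w z \<ge> 0"
    and hm: "(\<lambda>w. \<integral>z. loss (w, (mat 1, 0)) z \<partial>PZ) \<in> borel_measurable Wt"
    and int: "\<And>w. integrable PZ (loss w)"
    and lip: "\<And>z w w'. \<bar>loss w z - loss w' z\<bar> \<le> K * dW dt w w'"
    and dt0: "\<And>x. dt x x = 0" and K: "K \<ge> 0" and po: "0 \<le> po" "po \<le> 1"
  shows "popL PZ loss (deploy_dist P (bec po)) \<le> (\<integral>\<^sup>+w. ennreal (\<integral>z. loss (w, (mat 1, 0)) z \<partial>PZ) \<partial>P)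
      + ennreal (K * (\<Sum>r=1..CARD('d). real (CARD('d) choose r) * po^r * (1 - po)^(CARD('d) - r) * sqrt (real r)))"
proof -
  interpret PZ: prob_space PZ by fact
  interpret P: prob_space P by fact
  define B where "B = measure_pmf (bec po :: 'd chw pmf)"
  interpret B: prob_space B unfolding B_def by (rule prob_space_measure_pmf)
  interpret PB: pair_sigma_finite P B ..
  have sB: "sets B = sets (count_space UNIV)" by (simp add: B_def)
  note mcs = measurable_cong_sets[OF sets_pair_measure_cong[OF refl sB] refl]
  define I0 where "I0 = ((mat 1, 0) :: 'd chw)"
  define h where "h = (\<lambda>w. \<integral>z. loss (w, I0) z \<partial>PZ)"
  define \<phi> where "\<phi> = (\<lambda>c :: 'd chw. frob (fst c - mat 1) + norm (snd c))"
  define Bs where "Bs = (\<Sum>r=1..CARD('d). real (CARD('d) choose r) * po^r * (1 - po)^(CARD('d) - r) * sqrt (real r))"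
  have hmP[measurable]: "h \<in> borel_measurable P" unfolding h_def I0_def using hm by (simp add: measurable_cong_sets[OF sets refl])
  have phim[measurable]: "\<phi> \<in> borel_measurable (count_space UNIV)" by simp
  have phi0: "0 \<le> \<phi> c" for c unfolding \<phi>_def frob_def by (intro add_nonneg_nonneg real_sqrt_ge_zero sum_nonneg) auto
  have h0: "0 \<le> h w" for w unfolding h_def by (simp add: loss_nonneg)
  have pt: "(\<integral>\<^sup>+z. ennreal (loss (w, c) z) \<partial>PZ) \<le> ennreal (h w) + ennreal (K * \<phi> c)" for w c
  proof -
    have le: "loss (w, c) z \<le> loss (w, I0) z + K * \<phi> c" for z
    proof -
      have "\<bar>loss (w, c) z - loss (w, I0) z\<bar> \<le> K * dW dt (w, c) (w, I0)" by (rule lip)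
      also have "dW dt (w, c) (w, I0) = \<phi> c" unfolding dW_def \<phi>_def I0_def by (simp add: dt0)
      finally show ?thesis by simp
    qed
    have "(\<integral>\<^sup>+z. ennreal (loss (w, c) z) \<partial>PZ) \<le> (\<integral>\<^sup>+z. ennreal (loss (w, I0) z) + ennreal (K * \<phi> c) \<partial>PZ)"
      using le K phi0 loss_nonneg by (intro nn_integral_mono) (simp flip: ennreal_plus)
    also have "\<dots> = (\<integral>\<^sup>+z. ennreal (loss (w, I0) z) \<partial>PZ) + ennreal (K * \<phi> c)"
      using borel_measurable_integrable[OF int] by (simp add: nn_integral_add PZ.emeasure_space_1)
    also have "(\<integral>\<^sup>+z. ennreal (loss (w, I0) z) \<partial>PZ) = ennreal (h w)"
      unfolding h_def using int loss_nonneg by (intro nn_integral_eq_integral) auto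
    finally show ?thesis .
  qed
  have "popL PZ loss (deploy_dist P (bec po)) = (\<integral>\<^sup>+wc. (\<integral>\<^sup>+z. ennreal (loss wc z) \<partial>PZ) \<partial>(P \<Otimes>\<^sub>M B))"
    unfolding popL_def deploy_dist_def B_def ..
  also have "\<dots> \<le> (\<integral>\<^sup>+wc. ennreal (h (fst wc)) + ennreal (K * \<phi> (snd wc)) \<partial>(P \<Otimes>\<^sub>M B))"
    by (intro nn_integral_mono) (auto simp: pt split: prod.splits)
  also have "\<dots> = (\<integral>\<^sup>+wc. ennreal (h (fst wc)) \<partial>(P \<Otimes>\<^sub>M B)) + (\<integral>\<^sup>+wc. ennreal (K * \<phi> (snd wc)) \<partial>(P \<Otimes>\<^sub>M B))"
    by (rule nn_integral_add; unfold mcs; measurable)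
  also have "(\<integral>\<^sup>+wc. ennreal (h (fst wc)) \<partial>(P \<Otimes>\<^sub>M B)) = (\<integral>\<^sup>+w. ennreal (h w) \<partial>P)"
  proof -
    have "(\<integral>\<^sup>+wc. ennreal (h (fst wc)) \<partial>(P \<Otimes>\<^sub>M B)) = (\<integral>\<^sup>+w. \<integral>\<^sup>+c. ennreal (h w) \<partial>B \<partial>P)"
      by (subst B.nn_integral_fst[symmetric]) auto
    also have "\<dots> = (\<integral>\<^sup>+w. ennreal (h w) \<partial>P)" by (simp add: B.emeasure_space_1)
    finally show ?thesis .
  qed
  also have "(\<integral>\<^sup>+wc. ennreal (K * \<phi> (snd wc)) \<partial>(P \<Otimes>\<^sub>M B)) = ennreal (K * Bs)"
  proof -
    have "(\<integral>\<^sup>+wc. ennreal (K * \<phi> (snd wc)) \<partial>(P \<Otimes>\<^sub>M B)) = (\<integral>\<^sup>+c. \<integral>\<^sup>+w. ennreal (K * \<phi> c) \<partial>P \<partial>B)"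
    proof (subst PB.nn_integral_snd[symmetric])
      show "(\<lambda>wc. ennreal (K * \<phi> (snd wc))) \<in> borel_measurable (P \<Otimes>\<^sub>M B)"
        unfolding mcs by measurable
    qed simp
    also have "\<dots> = (\<integral>\<^sup>+c. ennreal K * ennreal (\<phi> c) \<partial>B)"
      using K phi0 by (simp add: P.emeasure_space_1 ennreal_mult)
    also have "\<dots> = ennreal K * ennreal Bs"
      by (subst nn_integral_cmult) (auto simp: B_def \<phi>_def bec_int[OF po] Bs_def)
    also have "\<dots> = ennreal (K * Bs)" using K by (simp add: ennreal_mult')
    finally show ?thesis .
  qed
  finally show ?thesis unfolding h_def I0_def Bs_def .
qed



lemma combine:
  fixes popl Hn En :: ennreal and KL' :: ereal
  assumes pop: "popl \<le> Hn + ennreal KB" and KB: "0 \<le> KB"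
    and KLn: "KL' \<noteq> -\<infinity>"
    and cases: "KL' = \<infinity> \<or> En = \<infinity> \<or> (\<exists>\<kappa> Hr Er. KL' = ereal \<kappa> \<and> Hn = ennreal Hr \<and> En = ennreal Er \<and> 0 \<le> Hr \<and> 0 \<le> Er \<and> Hr \<le> Er + (\<kappa> + lz) / k)"
    and lz: "lz \<le> k^2 * \<sigma>^2 / (2 * real n) - ln \<epsilon>" and k: "k > 0" and n: "n > 0"
  shows "enn2ereal popl \<le> enn2ereal En + ereal (k * \<sigma>^2 / (2 * real n)) + (KL' - ereal (ln \<epsilon>)) / ereal k + ereal KB"
  using cases
proof (elim disjE exE conjE)
  assume "KL' = \<infinity>"
  then have "(KL' - ereal (ln \<epsilon>)) / ereal k = \<infinity>" using k by simp
  then show ?thesis by simp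
next
  assume "En = \<infinity>"
  moreover have "(KL' - ereal (ln \<epsilon>)) / ereal k \<noteq> -\<infinity>" using KLn k
    by (cases KL') auto
  ultimately show ?thesis by (cases "(KL' - ereal (ln \<epsilon>)) / ereal k") auto
next
  fix \<kappa> Hr' Er' assume KL: "KL' = ereal \<kappa>" and H: "Hn = ennreal Hr'" and E: "En = ennreal Er'"
    and H0: "0 \<le> Hr'" and E0: "0 \<le> Er'" and ineq: "Hr' \<le> Er' + (\<kappa> + lz) / k"
  have H': "Hn = ennreal Hr'" "0 \<le> Hr'" using H H0 by auto
  have E': "En = ennreal Er'" "0 \<le> Er'" using E E0 by auto
  have "(\<kappa> + lz) / k \<le> (\<kappa> + (k^2 * \<sigma>^2 / (2 * real n) - ln \<epsilon>)) / k"
    using lz k by (intro divide_right_mono) auto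
  also have "\<dots> = k * \<sigma>^2 / (2 * real n) + (\<kappa> - ln \<epsilon>) / k"
    using k n by (simp add: field_simps power2_eq_square)
  finally have r: "Hr' \<le> Er' + k * \<sigma>^2 / (2 * real n) + (\<kappa> - ln \<epsilon>) / k"
    using ineq by linarith
  have "enn2ereal popl \<le> enn2ereal (Hn + ennreal KB)" using pop by (simp add: less_eq_ennreal.rep_eq)
  also have "enn2ereal (Hn + ennreal KB) = ereal (Hr' + KB)"
  proof -
    have e: "Hn + ennreal KB = ennreal (Hr' + KB)" unfolding H'(1) using H'(2) KB by (rule ennreal_plus[symmetric])
    show ?thesis unfolding e by (rule enn2ereal_ennreal) (use H'(2) KB in linarith)
  qed
  also have "\<dots> \<le> ereal (Er' + k * \<sigma>^2 / (2 * real n) + (\<kappa> - ln \<epsilon>) / k + KB)" using r by simp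
  also have "\<dots> = enn2ereal En + ereal (k * \<sigma>^2 / (2 * real n)) + (KL' - ereal (ln \<epsilon>)) / ereal k + ereal KB"
    using E' KL k by simp
  finally show ?thesis .
qed



theorem mainTheorem3:
  fixes PZ :: "'z measure" and n :: nat
    and Wt :: "'w measure"
    and dt :: "'w \<Rightarrow> 'w \<Rightarrow> real"
    and alg :: "(nat \<Rightarrow> 'z) \<Rightarrow> 'w measure"
    and loss :: "('w \<times> 'd::finite chw) \<Rightarrow> 'z \<Rightarrow> real"
    and po \<sigma> K :: real
    and Q :: "'w measure"
    and k \<epsilon> :: real
  assumes PZ: "prob_space PZ"
    and n: "n > 0"
    and alg: "alg \<in> PiM {..<n} (\<lambda>_. PZ) \<rightarrow>\<^sub>M prob_algebra Wt"
    and dt: "is_metric dt"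
    and po: "0 \<le> po" "po \<le> 1"
    and loss_nonneg: "\<And>w z. loss w z \<ge> 0"
    and loss_meas: "(\<lambda>(w, z). loss w z) \<in> borel_measurable ((Wt \<Otimes>\<^sub>M count_space UNIV) \<Otimes>\<^sub>M PZ)"
    and subg: "\<And>w. subgaussian PZ (loss w) \<sigma>"
    and lip: "\<And>z w w'. \<bar>loss w z - loss w' z\<bar> \<le> K * dW dt w w'"
    and Q: "Q \<in> space (prob_algebra Wt)"
    and k: "k > 0"
    and eps: "0 < \<epsilon>" "\<epsilon> < 1"
  shows "\<exists>A \<in> sets (PiM {..<n} (\<lambda>_. PZ)).
           A \<subseteq> {S \<in> space (PiM {..<n} (\<lambda>_. PZ)).
                 enn2ereal (popL PZ loss (deploy_dist (alg S) (bec po)))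
                 \<le> enn2ereal (empL loss n S (train_dist (alg S)))
                   + ereal (k * \<sigma>^2 / (2 * real n))
                   + (KL (alg S) Q - ereal (ln \<epsilon>)) / ereal k
                   + ereal (K * (\<Sum>r=1..CARD('d). real (CARD('d) choose r) * po^r
                                   * (1 - po)^(CARD('d) - r) * sqrt (real r)))}
           \<and> measure (PiM {..<n} (\<lambda>_. PZ)) A \<ge> 1 - \<epsilon>"
proof -
  interpret PZ: prob_space PZ by fact
  define \<Omega> where "\<Omega> = PiM {..<n} (\<lambda>_. PZ)"
  interpret PS: product_sigma_finite "\<lambda>_::nat. PZ"
    by (simp add: product_sigma_finite_def PZ.sigma_finite_measure_axioms)
  interpret Om: prob_space \<Omega> unfolding \<Omega>_def by (rule prob_space_PiM) (rule PZ)
  interpret Q: prob_space Q using Q by (simp add: space_prob_algebra)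
  have sQ: "sets Q = sets Wt" using Q by (simp add: space_prob_algebra)
  interpret OQ: pair_sigma_finite \<Omega> Q ..
  define I0 where "I0 = ((mat 1, 0) :: 'd chw)"
  define l0 where "l0 = (\<lambda>w z. loss (w, I0) z)"
  note loss_meas[measurable]
  have l0m[measurable]: "(\<lambda>(w, z). l0 w z) \<in> borel_measurable (Wt \<Otimes>\<^sub>M PZ)"
    unfolding l0_def by measurable
  define h where "h = (\<lambda>w. \<integral>z. l0 w z \<partial>PZ)"
  have hm[measurable]: "h \<in> borel_measurable Wt" unfolding h_def by measurable
  have h0: "0 \<le> h w" for w unfolding h_def l0_def by (simp add: loss_nonneg)
  have int: "integrable PZ (loss w)" for w using subg[of w] by (simp add: subgaussian_def)
  define Le where "Le = (\<lambda>w (S :: nat \<Rightarrow> 'z). (1 / real n) * (\<Sum>i<n. l0 w (S i)))"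
  have Le0: "0 \<le> Le w S" for w S unfolding Le_def l0_def by (simp add: loss_nonneg sum_nonneg)
  define F where "F = (\<lambda>S w. ennreal (exp (k * (h w - Le w S))))"
  have sOQ: "sets (\<Omega> \<Otimes>\<^sub>M Q) = sets (\<Omega> \<Otimes>\<^sub>M Wt)" by (rule sets_pair_measure_cong[OF refl sQ])
  have Fm: "(\<lambda>(S, w). F S w) \<in> borel_measurable (\<Omega> \<Otimes>\<^sub>M Q)"
  proof -
    have "(\<lambda>(S, w). F S w) \<in> borel_measurable (\<Omega> \<Otimes>\<^sub>M Wt)"
      unfolding F_def Le_def \<Omega>_def by measurable
    then show ?thesis by (simp add: measurable_cong_sets[OF sOQ refl])
  qed
  define X where "X = (\<lambda>S. \<integral>\<^sup>+w. F S w \<partial>Q)"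
  have Xm[measurable]: "X \<in> borel_measurable \<Omega>" unfolding X_def using Fm by measurable
  define C where "C = exp (k^2 * \<sigma>^2 / (2 * real n))"
  have C0: "C > 0" unfolding C_def by simp

  have intl: "integrable PZ (l0 w)" for w unfolding l0_def by (rule int)
  have l0m1[measurable]: "l0 w \<in> borel_measurable PZ" for w using intl[of w] by (rule borel_measurable_integrable)
  have Fbound: "(\<integral>\<^sup>+S. F S w \<partial>\<Omega>) \<le> ennreal C" for w
  proof -
    define t where "t = - (k / real n)"
    define g where "g = (\<lambda>z. ennreal (exp (t * (l0 w z - h w))))"
    have FS: "F S w = (\<Prod>i\<in>{..<n}. g (S i))" for S
    proof -
      have s1: "(\<Sum>i<n. t * (l0 w (S i) - h w)) = t * (\<Sum>i<n. l0 w (S i)) - real n * (t * h w)"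
        by (simp add: right_diff_distrib sum_subtractf sum_distrib_left)
      have s2: "k * (h w - Le w S) = t * (\<Sum>i<n. l0 w (S i)) - real n * (t * h w)"
        unfolding t_def Le_def using n by (simp add: field_simps)
      have "k * (h w - Le w S) = (\<Sum>i<n. t * (l0 w (S i) - h w))"
        unfolding s1 s2 ..
      then show ?thesis unfolding F_def g_def
        by (simp add: exp_sum prod_ennreal)
    qed
    define I where "I = (\<integral>z. exp (t * (l0 w z - h w)) \<partial>PZ)"
    have sg: "integrable PZ (\<lambda>z. exp (t * (l0 w z - h w)))" "ln I \<le> t^2 * \<sigma>^2 / 2"
      using subg[of "(w, I0)"] unfolding subgaussian_def I_def h_def l0_def by auto
    have I0': "0 \<le> I" unfolding I_def by simp
    have IE: "I \<le> exp (t^2 * \<sigma>^2 / 2)"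
    proof (cases "I > 0")
      case True
      then have "I = exp (ln I)" by simp
      also have "\<dots> \<le> exp (t^2 * \<sigma>^2 / 2)" using sg(2) by simp
      finally show ?thesis .
    next
      case False
      then show ?thesis by (smt (verit) exp_gt_zero)
    qed
    have gI: "(\<integral>\<^sup>+z. g z \<partial>PZ) = ennreal I"
      unfolding g_def I_def using sg(1) by (intro nn_integral_eq_integral) auto
    have "(\<integral>\<^sup>+S. F S w \<partial>\<Omega>) = (\<integral>\<^sup>+S. (\<Prod>i\<in>{..<n}. g (S i)) \<partial>\<Omega>)" by (simp add: FS)
    also have "\<dots> = (\<Prod>i\<in>{..<n}. (\<integral>\<^sup>+z. g z \<partial>PZ))"
      unfolding \<Omega>_def by (rule PS.product_nn_integral_prod) (auto simp: g_def)
    also have "\<dots> = ennreal (I ^ n)" by (simp add: gI ennreal_power I0')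
    also have "\<dots> \<le> ennreal (exp (t^2 * \<sigma>^2 / 2) ^ n)"
      using IE I0' by (intro ennreal_leI power_mono) auto
    also have "exp (t^2 * \<sigma>^2 / 2) ^ n = C"
    proof -
      have "exp (t^2 * \<sigma>^2 / 2) ^ n = exp (real n * (t^2 * \<sigma>^2 / 2))" by (rule exp_of_nat_mult[symmetric])
      also have "real n * (t^2 * \<sigma>^2 / 2) = k^2 * \<sigma>^2 / (2 * real n)"
        unfolding t_def using n by (simp add: field_simps power2_eq_square)
      finally show ?thesis unfolding C_def .
    qed
    finally show ?thesis .
  qed
  have EX: "(\<integral>\<^sup>+S. X S \<partial>\<Omega>) \<le> ennreal C"
  proof -
    have "(\<integral>\<^sup>+S. X S \<partial>\<Omega>) = (\<integral>\<^sup>+w. (\<integral>\<^sup>+S. F S w \<partial>\<Omega>) \<partial>Q)"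
      unfolding X_def by (rule OQ.Fubini'[OF Fm, symmetric])
    also have "\<dots> \<le> (\<integral>\<^sup>+w. ennreal C \<partial>Q)" by (intro nn_integral_mono Fbound)
    also have "\<dots> = ennreal C" by (simp add: Q.emeasure_space_1)
    finally show ?thesis .
  qed
  define A where "A = {S \<in> space \<Omega>. X S \<le> ennreal (C / \<epsilon>)}"
  have Asets: "A \<in> sets \<Omega>" unfolding A_def by measurable
  have Ameas: "measure \<Omega> A \<ge> 1 - \<epsilon>"
  proof -
    have sub: "space \<Omega> - A \<subseteq> {S \<in> space \<Omega>. 1 \<le> ennreal (\<epsilon> / C) * X S}"
    proof
      fix S assume S: "S \<in> space \<Omega> - A"
      then have lt: "ennreal (C / \<epsilon>) \<le> X S" unfolding A_def by auto
      have "1 = ennreal (\<epsilon> / C) * ennreal (C / \<epsilon>)"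
        using C0 eps by (simp add: ennreal_mult'[symmetric])
      also have "\<dots> \<le> ennreal (\<epsilon> / C) * X S" using lt by (rule mult_left_mono) simp
      finally show "S \<in> {S \<in> space \<Omega>. 1 \<le> ennreal (\<epsilon> / C) * X S}" using S by auto
    qed
    have "emeasure \<Omega> (space \<Omega> - A) \<le> emeasure \<Omega> {S \<in> space \<Omega>. 1 \<le> ennreal (\<epsilon> / C) * X S}"
      using sub by (intro emeasure_mono) auto
    also have "\<dots> \<le> ennreal (\<epsilon> / C) * (\<integral>\<^sup>+S. X S * indicator (space \<Omega>) S \<partial>\<Omega>)"
      by (rule nn_integral_Markov_inequality) auto
    also have "(\<integral>\<^sup>+S. X S * indicator (space \<Omega>) S \<partial>\<Omega>) = (\<integral>\<^sup>+S. X S \<partial>\<Omega>)"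
      by (intro nn_integral_cong) simp
    also have "ennreal (\<epsilon> / C) * (\<integral>\<^sup>+S. X S \<partial>\<Omega>) \<le> ennreal (\<epsilon> / C) * ennreal C"
      using EX by (rule mult_left_mono) simp
    also have "\<dots> = ennreal \<epsilon>" using C0 eps by (simp add: ennreal_mult'[symmetric])
    finally have "emeasure \<Omega> (space \<Omega> - A) \<le> ennreal \<epsilon>" .
    then have "measure \<Omega> (space \<Omega> - A) \<le> \<epsilon>"
      using eps by (simp add: Om.emeasure_eq_measure)
    moreover have "measure \<Omega> (space \<Omega> - A) = 1 - measure \<Omega> A" using Asets by (rule Om.prob_compl)
    ultimately show ?thesis by simp
  qed

  have dt0: "dt x x = 0" for x using dt unfolding is_metric_def by blast
  have K0: "K \<ge> 0"
  proof -
    define b :: "real^'d" where "b = (\<chi> i. (1::real))"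
    have "b \<noteq> 0" unfolding b_def by (metis vec_lambda_beta zero_index zero_neq_one)
    then have nb: "norm b > 0" by simp
    have "\<bar>loss (undefined, (mat 1, 0)) undefined - loss (undefined, (mat 1, b)) undefined\<bar>
        \<le> K * dW dt (undefined, (mat 1, 0)) (undefined, (mat 1, b))" by (rule lip)
    moreover have "dW dt (undefined, (mat 1, 0)) (undefined :: 'w, (mat 1, b)) = norm b"
      unfolding dW_def by (simp add: dt0 frob_def)
    ultimately have "0 \<le> K * norm b" by (smt (verit))
    then show ?thesis using nb by (simp add: zero_le_mult_iff)
  qed
  define Bs where "Bs = (\<Sum>r=1..CARD('d). real (CARD('d) choose r) * po^r * (1 - po)^(CARD('d) - r) * sqrt (real r))"
  have Bs0: "0 \<le> Bs" unfolding Bs_def using po by (intro sum_nonneg mult_nonneg_nonneg) auto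
  have l0w: "(\<lambda>w. l0 w z) \<in> borel_measurable Wt" if "z \<in> space PZ" for z
    using measurable_compose[OF measurable_Pair2'[OF that] l0m] by simp
  have lw: "(\<lambda>wc. loss wc z) \<in> borel_measurable (Wt \<Otimes>\<^sub>M count_space UNIV)" if "z \<in> space PZ" for z
    using measurable_compose[OF measurable_Pair2'[OF that] loss_meas] by simp
  show ?thesis
  proof (intro bexI conjI)
    show "A \<in> sets (PiM {..<n} (\<lambda>_. PZ))" using Asets unfolding \<Omega>_def .
    show "1 - \<epsilon> \<le> measure (PiM {..<n} (\<lambda>_. PZ)) A" using Ameas unfolding \<Omega>_def .
    show "A \<subseteq> {S \<in> space (PiM {..<n} (\<lambda>_. PZ)).
                 enn2ereal (popL PZ loss (deploy_dist (alg S) (bec po)))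
                 \<le> enn2ereal (empL loss n S (train_dist (alg S)))
                   + ereal (k * \<sigma>^2 / (2 * real n))
                   + (KL (alg S) Q - ereal (ln \<epsilon>)) / ereal k
                   + ereal (K * (\<Sum>r=1..CARD('d). real (CARD('d) choose r) * po^r
                                   * (1 - po)^(CARD('d) - r) * sqrt (real r)))}"
    proof
      fix S assume SA: "S \<in> A"
      then have SO: "S \<in> space \<Omega>" and XS: "X S \<le> ennreal (C / \<epsilon>)" unfolding A_def by auto
      define P where "P = alg S"
      have Pa: "P \<in> space (prob_algebra Wt)" unfolding P_def using measurable_space[OF alg] SO unfolding \<Omega>_def by blast
      then have Pp: "prob_space P" and sP: "sets P = sets Wt" by (auto simp: space_prob_algebra)
      interpret P: prob_space P by fact
      have Si: "S i \<in> space PZ" if "i < n" for i using SO that unfolding \<Omega>_def by (auto simp: space_PiM PiE_def)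
      have hmW: "(\<lambda>w. \<integral>z. loss (w, (mat 1, 0)) z \<partial>PZ) \<in> borel_measurable Wt" using hm unfolding h_def l0_def I0_def .
      have dep: "popL PZ loss (deploy_dist P (bec po)) \<le> (\<integral>\<^sup>+w. ennreal (h w) \<partial>P) + ennreal (K * Bs)"
        using deploy_bound[OF PZ Pp sP loss_nonneg hmW int lip dt0 K0 po] unfolding h_def l0_def I0_def Bs_def .
      have Lem: "(\<lambda>w. Le w S) \<in> borel_measurable Wt"
        unfolding Le_def by (intro borel_measurable_times borel_measurable_const borel_measurable_sum l0w Si) auto
      have emp: "empL loss n S (train_dist P) = (\<integral>\<^sup>+w. ennreal (Le w S) \<partial>P)"
      proof -
        define R where "R = return (count_space UNIV) I0"
        interpret R: prob_space R unfolding R_def by (rule prob_space_return) simp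
        have sR: "sets R = sets (count_space UNIV)" unfolding R_def by simp
        define f where "f = (\<lambda>wc. ennreal ((1 / real n) * (\<Sum>i<n. loss wc (S i))))"
        have fm: "f \<in> borel_measurable (P \<Otimes>\<^sub>M R)"
          unfolding measurable_cong_sets[OF sets_pair_measure_cong[OF sP sR] refl] f_def
          by (rule measurable_compose[OF _ measurable_ennreal], intro borel_measurable_times borel_measurable_const borel_measurable_sum lw Si) auto
        have "empL loss n S (train_dist P) = (\<integral>\<^sup>+wc. f wc \<partial>(P \<Otimes>\<^sub>M R))"
          unfolding empL_def train_dist_def R_def I0_def f_def ..
        also have "\<dots> = (\<integral>\<^sup>+w. \<integral>\<^sup>+c. f (w, c) \<partial>R \<partial>P)" by (rule R.nn_integral_fst[symmetric, OF fm])
        also have "\<dots> = (\<integral>\<^sup>+w. f (w, I0) \<partial>P)"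
          unfolding R_def by (intro nn_integral_cong nn_integral_return) auto
        also have "\<dots> = (\<integral>\<^sup>+w. ennreal (Le w S) \<partial>P)" unfolding f_def Le_def l0_def ..
        finally show ?thesis .
      qed
      have FSm: "F S \<in> borel_measurable Q"
        using measurable_compose[OF measurable_Pair1'[OF SO] Fm] by simp
      have Xfin: "X S \<noteq> \<infinity>" using XS by (auto simp: top_unique)
      define Z where "Z = enn2real (X S)"
      have XZ: "X S = ennreal Z" unfolding Z_def using Xfin by (cases "X S") auto
      have "X S \<noteq> 0"
      proof
        assume "X S = 0"
        then have "AE w in Q. F S w = 0" unfolding X_def using FSm by (simp add: nn_integral_0_iff_AE)
        then have "AE w in Q. False" by eventually_elim (simp add: F_def)
        then show False by (simp add: Q.AE_False)
      qed
      then have Zpos: "Z > 0" using XZ unfolding Z_def by (cases "X S") auto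
      have ZC: "Z \<le> C / \<epsilon>" using XS XZ C0 eps by (simp add: ennreal_le_iff)
      have lz: "ln Z \<le> k^2 * \<sigma>^2 / (2 * real n) - ln \<epsilon>"
      proof -
        have "ln Z \<le> ln (C / \<epsilon>)" using ZC Zpos C0 eps by simp
        also have "\<dots> = k^2 * \<sigma>^2 / (2 * real n) - ln \<epsilon>" using C0 eps by (simp add: ln_div C_def)
        finally show ?thesis .
      qed
      have sPQ: "sets P = sets Q" using sP sQ by simp
      have res: "KL P Q \<noteq> -\<infinity> \<and> (KL P Q = \<infinity> \<or> (\<integral>\<^sup>+w. ennreal (Le w S) \<partial>P) = \<infinity> \<or>
          (\<exists>\<kappa> Hr Er. KL P Q = ereal \<kappa> \<and> (\<integral>\<^sup>+w. ennreal (h w) \<partial>P) = ennreal Hr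
            \<and> (\<integral>\<^sup>+w. ennreal (Le w S) \<partial>P) = ennreal Er \<and> 0 \<le> Hr \<and> 0 \<le> Er \<and> Hr \<le> Er + (\<kappa> + ln Z) / k))"
      proof (cases "absolutely_continuous Q P")
        case True
        have hmQ: "h \<in> borel_measurable Q" using hm by (simp add: measurable_cong_sets[OF sQ refl])
        have LemQ: "(\<lambda>w. Le w S) \<in> borel_measurable Q" using Lem by (simp add: measurable_cong_sets[OF sQ refl])
        have Zeq: "(\<integral>\<^sup>+w. ennreal (exp (k * (h w - Le w S))) \<partial>Q) = ennreal Z" using XZ unfolding X_def F_def .
        show ?thesis using DV[OF Pp Q.prob_space_axioms sPQ True hmQ LemQ h0 Le0 k Zeq Zpos] by blast
      next
        case False
        then show ?thesis by (simp add: KL_def)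
      qed
      have "enn2ereal (popL PZ loss (deploy_dist P (bec po)))
           \<le> enn2ereal (\<integral>\<^sup>+w. ennreal (Le w S) \<partial>P) + ereal (k * \<sigma>^2 / (2 * real n))
             + (KL P Q - ereal (ln \<epsilon>)) / ereal k + ereal (K * Bs)"
        using combine[OF dep _ _ _ lz k n] res K0 Bs0 by auto
      note fin = this
      show "S \<in> {S \<in> space (PiM {..<n} (\<lambda>_. PZ)).
                 enn2ereal (popL PZ loss (deploy_dist (alg S) (bec po)))
                 \<le> enn2ereal (empL loss n S (train_dist (alg S)))
                   + ereal (k * \<sigma>^2 / (2 * real n))
                   + (KL (alg S) Q - ereal (ln \<epsilon>)) / ereal k
                   + ereal (K * (\<Sum>r=1..CARD('d). real (CARD('d) choose r) * po^r
                                   * (1 - po)^(CARD('d) - r) * sqrt (real r)))}"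
        using SO fin emp unfolding \<Omega>_def P_def Bs_def by simp
    qed
  qed
qed


end
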